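(* Let $\mathcal{H}$ be an infinite-dimensional separable complex Hilbert space, let $A:\mathcal{H}\to\mathcal{H}$ be compact and injective, let $g\in\mathrm{ran}A$, and let $f\in\mathcal{H}$ be the unique vector with $Af=g$. Let $(u_n)_{n\in\mathbb{N}}$ and $(v_n)_{n\in\mathbb{N}}$ be orthonormal bases of $\mathcal{H}$, and let $A_N$, $g_N$ and $\widehat{x}$ be as in the context. Let $(f^{(N)})_{N\in\mathbb{N}}$ be a sequence with $f^{(N)}\in\mathbb{C}^N$ such that, writing $\varepsilon^{(N)}:=A_Nf^{(N)}-g_N\in\mathbb{C}^N$, one has $\|\varepsilon^{(N)}\|_{\mathbb{C}^N}\to0$ as $N\to\infty$. Assume moreover that $\sup_{N}\|\widehat{f^{(N)}}\|_{\mathcal{H}}<\infty$. Then, as $N\to\infty$, \[\|g-A\widehat{f^{(N)}}\|_{\mathcal{H}}\to0\qquad\text{and}\qquad f-\widehat{f^{(N)}}\rightharpoonup0\ \text{(weakly in }\mathcal{H}).\]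
   Context: For orthonormal bases $(u_n)$, $(v_n)$ of $\mathcal{H}$ and $N\in\mathbb{N}$: $A_N$ is the $N\times N$ matrix with entries $(A_N)_{ij}=\langle v_i,Au_j\rangle$ for $i,j\in\{1,\dots,N\}$; $g_N=(\langle v_1,g\rangle,\dots,\langle v_N,g\rangle)\in\mathbb{C}^N$; and for $x=(x_1,\dots,x_N)\in\mathbb{C}^N$, $\widehat{x}:=\sum_{n=1}^Nx_nu_n\in\mathcal{H}$. The inner product is antilinear in the first entry. Weak convergence $\xi_N\rightharpoonup\xi$ means $\langle\eta,\xi_N\rangle\to\langle\eta,\xi\rangle$ for every $\eta\in\mathcal{H}$. *)

theory Defs
  imports "HOL-Analysis.Analysis"
begin

class complex_vector = real_vector +
  fixes scaleC :: "complex \<Rightarrow> 'a \<Rightarrow> 'a" (infixr \<open>*\<^sub>C\<close> 75)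
  assumes scaleC_add_right: "a *\<^sub>C (x + y) = a *\<^sub>C x + a *\<^sub>C y"
    and scaleC_add_left: "(a + b) *\<^sub>C x = a *\<^sub>C x + b *\<^sub>C x"
    and scaleC_scaleC: "a *\<^sub>C (b *\<^sub>C x) = (a * b) *\<^sub>C x"
    and scaleC_one: "1 *\<^sub>C x = x"
    and scaleR_scaleC: "r *\<^sub>R x = complex_of_real r *\<^sub>C x"

text \<open>Inner product antilinear in the first argument, linear in the second;
  the norm is the one induced by the inner product.\<close>
class complex_inner = complex_vector + real_normed_vector +
  fixes cinner :: "'a \<Rightarrow> 'a \<Rightarrow> complex"
  assumes cinner_commute: "cinner x y = cnj (cinner y x)"
    and cinner_add_right: "cinner x (y + z) = cinner x y + cinner x z"
    and cinner_scaleC_right: "cinner x (r *\<^sub>C y) = r * cinner x y"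
    and cinner_ge_zero: "0 \<le> Re (cinner x x)"
    and cinner_eq_zero_iff: "cinner x x = 0 \<longleftrightarrow> x = 0"
    and norm_eq_sqrt_cinner: "norm x = sqrt (Re (cinner x x))"

class complex_hilbert = complex_inner + complete_space

definition clinear :: "('a::complex_vector \<Rightarrow> 'b::complex_vector) \<Rightarrow> bool" where
  "clinear T \<longleftrightarrow> (\<forall>x y. T (x + y) = T x + T y) \<and> (\<forall>c x. T (c *\<^sub>C x) = c *\<^sub>C T x)"

definition compact_op :: "('a::complex_inner \<Rightarrow> 'b::complex_inner) \<Rightarrow> bool" where
  "compact_op T \<longleftrightarrow> clinear T \<and> compact (closure (T ` cball 0 1))"

definition cspan :: "'a::complex_vector set \<Rightarrow> 'a set" where
  "cspan S = {\<Sum>x\<in>F. c x *\<^sub>C x | F c. finite F \<and> F \<subseteq> S}"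

definition orthonormal_basis :: "'i set \<Rightarrow> ('i \<Rightarrow> 'a::complex_inner) \<Rightarrow> bool" where
  "orthonormal_basis I u \<longleftrightarrow>
     (\<forall>i\<in>I. \<forall>j\<in>I. cinner (u i) (u j) = (if i = j then 1 else 0)) \<and>
     closure (cspan (u ` I)) = UNIV"

text \<open>Section matrix, data vector and synthesis map; vectors in C^N are functions
  on nat of which the entries 1..N are used.\<close>
definition sec_mat :: "('a::complex_inner \<Rightarrow> 'a) \<Rightarrow> (nat \<Rightarrow> 'a) \<Rightarrow> (nat \<Rightarrow> 'a) \<Rightarrow> nat \<Rightarrow> nat \<Rightarrow> complex" where
  "sec_mat A u v i j = cinner (v i) (A (u j))"

definition mat_app :: "nat \<Rightarrow> (nat \<Rightarrow> nat \<Rightarrow> complex) \<Rightarrow> (nat \<Rightarrow> complex) \<Rightarrow> (nat \<Rightarrow> complex)" where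
  "mat_app N M x = (\<lambda>i. \<Sum>j=1..N. M i j * x j)"

definition sec_vec :: "(nat \<Rightarrow> 'a::complex_inner) \<Rightarrow> 'a \<Rightarrow> nat \<Rightarrow> complex" where
  "sec_vec v g = (\<lambda>i. cinner (v i) g)"

definition synth :: "nat \<Rightarrow> (nat \<Rightarrow> 'a::complex_vector) \<Rightarrow> (nat \<Rightarrow> complex) \<Rightarrow> 'a" where
  "synth N u x = (\<Sum>n=1..N. x n *\<^sub>C u n)"

definition normCN :: "nat \<Rightarrow> (nat \<Rightarrow> complex) \<Rightarrow> real" where
  "normCN N x = sqrt (\<Sum>i=1..N. (cmod (x i))\<^sup>2)"

end

theory Submission
  imports Defs
begin

lemma coeff_subseq:
  fixes c :: "nat \<Rightarrow> nat \<Rightarrow> complex"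
  assumes "\<And>k j. cmod (c k j) \<le> B"
  obtains r d where "strict_mono r" "\<And>j. (\<lambda>k. c (r k) j) \<longlonglongrightarrow> d j"
proof -
  have "compact (PiE UNIV (\<lambda>_::nat. cball (0::complex) B))"
    using compactin_PiE[of "\<lambda>_. euclidean" UNIV "\<lambda>_::nat. cball (0::complex) B"]
    by (simp add: euclidean_product_topology)
  then have sc: "seq_compact (PiE UNIV (\<lambda>_::nat. cball (0::complex) B))"
    by (rule compact_imp_seq_compact)
  have mem: "\<forall>k. c k \<in> PiE UNIV (\<lambda>_::nat. cball (0::complex) B)"
    using assms by auto
  obtain l r where r: "strict_mono r" and lim: "(c \<circ> r) \<longlonglongrightarrow> l"
    using seq_compactE[OF sc mem] by blast
  have co: "(\<lambda>k. c (r k) j) \<longlonglongrightarrow> l j" for j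
  proof -
    have "isCont (\<lambda>x::nat\<Rightarrow>complex. x j) l"
      using continuous_on_eq_continuous_at[OF open_UNIV, of "\<lambda>x::nat\<Rightarrow>complex. x j"] by simp
    from isCont_tendsto_compose[OF this lim] show ?thesis by (simp add: o_def)
  qed
  show ?thesis by (rule that[OF r co])
qed

lemma cinner_add_left: "cinner (x + y) (z::'a::complex_inner) = cinner x z + cinner y z"
  by (subst cinner_commute, subst (2) cinner_commute, subst (3) cinner_commute) (simp add: cinner_add_right)
lemma cinner_scaleC_left: "cinner (r *\<^sub>C x) (y::'a::complex_inner) = cnj r * cinner x y"
  by (subst cinner_commute, subst (2) cinner_commute) (simp add: cinner_scaleC_right)
lemma cinner_zero_right[simp]: "cinner x (0::'a::complex_inner) = 0"
  using cinner_add_right[of x 0 0] by simp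
lemma cinner_zero_left[simp]: "cinner (0::'a::complex_inner) x = 0"
  by (subst cinner_commute) simp
lemma cinner_minus_right: "cinner x (- y::'a::complex_inner) = - cinner x y"
  using cinner_add_right[of x y "-y"] by (simp add: eq_neg_iff_add_eq_0 add.commute)
lemma cinner_diff_right: "cinner x (y - z::'a::complex_inner) = cinner x y - cinner x z"
  using cinner_add_right[of x y "-z"] by (simp add: cinner_minus_right)
lemma cinner_minus_left: "cinner (- x::'a::complex_inner) y = - cinner x y"
  by (subst cinner_commute, subst (2) cinner_commute) (simp add: cinner_minus_right)
lemma cinner_diff_left: "cinner (x - y::'a::complex_inner) z = cinner x z - cinner y z"
  using cinner_add_left[of x "-y" z] by (simp add: cinner_minus_left)
lemma cinner_sum_right: "cinner x (\<Sum>i\<in>F. f i::'a::complex_inner) = (\<Sum>i\<in>F. cinner x (f i))"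
  by (induction F rule: infinite_finite_induct) (auto simp: cinner_add_right)
lemma cinner_sum_left: "cinner (\<Sum>i\<in>F. f i::'a::complex_inner) x = (\<Sum>i\<in>F. cinner (f i) x)"
  by (induction F rule: infinite_finite_induct) (auto simp: cinner_add_left)
lemma cinner_scaleR_right: "cinner x (r *\<^sub>R y::'a::complex_inner) = r *\<^sub>R cinner x y"
  by (simp add: scaleR_scaleC cinner_scaleC_right scaleR_conv_of_real)
lemma cinner_scaleR_left: "cinner (r *\<^sub>R x::'a::complex_inner) y = r *\<^sub>R cinner x y"
  by (simp add: scaleR_scaleC cinner_scaleC_left scaleR_conv_of_real)

lemma cinner_self: "cinner x (x::'a::complex_inner) = complex_of_real ((norm x)\<^sup>2)"
proof -
  have "Im (cinner x x) = 0" using arg_cong[OF cinner_commute[of x x], of Im] by simp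
  then show ?thesis using cinner_ge_zero[of x] norm_eq_sqrt_cinner[of x]
    by (simp add: complex_eq_iff)
qed

lemma cinner_self_Re: "Re (cinner x (x::'a::complex_inner)) = (norm x)\<^sup>2"
  by (simp add: cinner_self)

lemma cauchy_schwarz: "cmod (cinner x (y::'a::complex_inner)) \<le> norm x * norm y"
proof (cases "y = 0")
  case True then show ?thesis by simp
next
  case False
  define t where "t = cinner y x / cinner y y"
  have yy: "cinner y y = of_real ((norm y)\<^sup>2)" by (rule cinner_self)
  have ny: "norm y > 0" using False by simp
  have yy0: "cinner y y \<noteq> 0" using False cinner_eq_zero_iff by blast
  have e1: "cinner (x - t *\<^sub>C y) (x - t *\<^sub>C y) = cinner x x - t * cinner x y - cnj t * cinner y x + cnj t * t * cinner y y"
    by (simp add: cinner_diff_left cinner_diff_right cinner_scaleC_left cinner_scaleC_right algebra_simps)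
  have e2: "cnj t * t * cinner y y = cnj t * cinner y x"
  proof -
    have "t * cinner y y = cinner y x" using yy0 by (simp add: t_def)
    then show ?thesis by (simp add: mult.assoc)
  qed
  have c: "cinner y x = cnj (cinner x y)" by (rule cinner_commute)
  have "t * cinner x y = (cnj (cinner x y) * cinner x y) / cinner y y" by (simp add: t_def c)
  also have "cnj (cinner x y) * cinner x y = of_real ((cmod (cinner x y))\<^sup>2)"
    by (simp only: complex_norm_square mult.commute)
  finally have e3: "t * cinner x y = of_real ((cmod (cinner x y))\<^sup>2 / (norm y)\<^sup>2)"
    by (simp add: yy)
  have "0 \<le> Re (cinner (x - t *\<^sub>C y) (x - t *\<^sub>C y))" by (rule cinner_ge_zero)
  also have "\<dots> = Re (cinner x x) - Re (t * cinner x y)"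
    unfolding e1 e2 by simp
  finally have "(cmod (cinner x y))\<^sup>2 / (norm y)\<^sup>2 \<le> (norm x)\<^sup>2"
    unfolding e3 cinner_self_Re by simp
  then have "(cmod (cinner x y))\<^sup>2 \<le> (norm x)\<^sup>2 * (norm y)\<^sup>2"
    using ny by (simp add: divide_le_eq)
  then have "(cmod (cinner x y))\<^sup>2 \<le> ((norm x) * norm y)\<^sup>2"
    by (simp add: power_mult_distrib)
  then show ?thesis by (rule power2_le_imp_le) simp
qed

lemma bb_cinner: "bounded_bilinear (cinner :: 'a::complex_inner \<Rightarrow> 'a \<Rightarrow> complex)"
  apply unfold_locales
  apply (simp_all add: cinner_add_left cinner_add_right cinner_scaleR_left cinner_scaleR_right)
  using cauchy_schwarz by (metis mult.right_neutral)

lemma tendsto_cinner[tendsto_intros]: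
  "(f \<longlongrightarrow> a) F \<Longrightarrow> (g \<longlongrightarrow> b) F \<Longrightarrow> ((\<lambda>x. cinner (f x) (g x::'a::complex_inner)) \<longlongrightarrow> cinner a b) F"
  by (rule bounded_bilinear.tendsto[OF bb_cinner])

lemma continuous_on_cinner[continuous_intros]:
  "continuous_on S f \<Longrightarrow> continuous_on S g \<Longrightarrow> continuous_on S (\<lambda>x. cinner (f x) (g x::'a::complex_inner))"
  by (rule bounded_bilinear.continuous_on[OF bb_cinner])

lemma norm_scaleC: "norm (c *\<^sub>C x::'a::complex_inner) = cmod c * norm x"
proof -
  have "cinner (c *\<^sub>C x) (c *\<^sub>C x) = (cnj c * c) * cinner x x"
    by (simp add: cinner_scaleC_left cinner_scaleC_right mult.assoc)
  also have "cnj c * c = of_real ((cmod c)\<^sup>2)"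
    by (simp only: complex_norm_square mult.commute)
  finally have "(norm (c *\<^sub>C x))\<^sup>2 = (cmod c)\<^sup>2 * (norm x)\<^sup>2"
    unfolding cinner_self by (metis of_real_eq_iff of_real_mult)
  then have "(norm (c *\<^sub>C x))\<^sup>2 = (cmod c * norm x)\<^sup>2"
    by (simp add: power_mult_distrib)
  then show ?thesis by (simp add: power2_eq_iff_nonneg)
qed

lemma onb_orth: "orthonormal_basis {1..} u \<Longrightarrow> 1 \<le> i \<Longrightarrow> 1 \<le> j \<Longrightarrow>
   cinner (u i) (u j :: 'a::complex_inner) = (if i = j then 1 else 0)"
  by (simp add: orthonormal_basis_def)

lemma onb_dense: "orthonormal_basis {1..} u \<Longrightarrow> closure (cspan (u ` {1..})) = (UNIV :: 'a::complex_inner set)"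
  by (simp add: orthonormal_basis_def)

lemma onb_norm: assumes "orthonormal_basis {1..} u" "1 \<le> i" shows "norm (u i :: 'a::complex_inner) = 1"
proof -
  have "complex_of_real ((norm (u i))\<^sup>2) = 1" using onb_orth[OF assms(1,2,2)] cinner_self[of "u i"] by simp
  then have "(norm (u i))\<^sup>2 = 1" by (metis of_real_eq_1_iff)
  then show ?thesis by (simp add: power2_eq_1_iff) (smt (verit) norm_ge_zero)
qed

lemma onb_coeff:
  assumes "orthonormal_basis {1..} u" "finite F" "F \<subseteq> {1..}" "1 \<le> i"
  shows "cinner (u i) (\<Sum>j\<in>F. c j *\<^sub>C u j :: 'a::complex_inner) = (if i \<in> F then c i else 0)"
proof -
  have "cinner (u i) (\<Sum>j\<in>F. c j *\<^sub>C u j) = (\<Sum>j\<in>F. if j = i then c j else 0)"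
    unfolding cinner_sum_right
  proof (rule sum.cong)
    fix j assume "j \<in> F"
    then have "1 \<le> j" using assms(3) by auto
    then show "cinner (u i) (c j *\<^sub>C u j) = (if j = i then c j else 0)"
      using onb_orth[OF assms(1,4)] by (auto simp: cinner_scaleC_right)
  qed simp
  then show ?thesis using assms(2) by (simp add: sum.delta)
qed

lemma onb_inner_sums:
  assumes "orthonormal_basis {1..} u" "finite F" "F \<subseteq> {1..}"
  shows "cinner (\<Sum>j\<in>F. c j *\<^sub>C u j) (\<Sum>j\<in>F. d j *\<^sub>C u j :: 'a::complex_inner) = (\<Sum>j\<in>F. cnj (c j) * d j)"
proof -
  have "cinner (\<Sum>j\<in>F. c j *\<^sub>C u j) (\<Sum>j\<in>F. d j *\<^sub>C u j) = (\<Sum>i\<in>F. cnj (c i) * cinner (u i) (\<Sum>j\<in>F. d j *\<^sub>C u j))"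
    by (simp add: cinner_sum_left cinner_scaleC_left)
  also have "\<dots> = (\<Sum>i\<in>F. cnj (c i) * d i)"
  proof (rule sum.cong[OF refl])
    fix i assume "i \<in> F"
    then have "1 \<le> i" using assms(3) by auto
    then show "cnj (c i) * cinner (u i) (\<Sum>j\<in>F. d j *\<^sub>C u j) = cnj (c i) * d i"
      using onb_coeff[OF assms] \<open>i \<in> F\<close> by simp
  qed
  finally show ?thesis .
qed

lemma Re_cnj_mult_self: "Re (cnj z * z) = (cmod z)\<^sup>2"
  unfolding cmod_power2 by (simp add: power2_eq_square)

lemma onb_norm_sum:
  assumes "orthonormal_basis {1..} u" "finite F" "F \<subseteq> {1..}"
  shows "(norm (\<Sum>j\<in>F. c j *\<^sub>C u j :: 'a::complex_inner))\<^sup>2 = (\<Sum>j\<in>F. (cmod (c j))\<^sup>2)"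
  unfolding cinner_self_Re[symmetric] onb_inner_sums[OF assms] Re_sum Re_cnj_mult_self ..

lemma bessel:
  assumes "orthonormal_basis {1..} u" "finite F" "F \<subseteq> {1..}"
  shows "(\<Sum>j\<in>F. (cmod (cinner (u j) x))\<^sup>2) \<le> (norm (x::'a::complex_inner))\<^sup>2"
proof -
  define p where "p = (\<Sum>j\<in>F. cinner (u j) x *\<^sub>C u j)"
  define S where "S = (\<Sum>j\<in>F. (cmod (cinner (u j) x))\<^sup>2)"
  have px: "Re (cinner p x) = S"
    unfolding p_def S_def cinner_sum_left cinner_scaleC_left Re_sum Re_cnj_mult_self ..
  have xp: "Re (cinner x p) = S"
    using px by (subst cinner_commute) simp
  have pp: "Re (cinner p p) = S"
    unfolding cinner_self_Re p_def S_def by (rule onb_norm_sum[OF assms])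
  have "0 \<le> Re (cinner (x - p) (x - p))" by (rule cinner_ge_zero)
  also have "\<dots> = Re (cinner x x) - Re (cinner x p) - Re (cinner p x) + Re (cinner p p)"
    by (simp add: cinner_diff_left cinner_diff_right)
  finally show ?thesis using px xp pp by (simp add: cinner_self_Re S_def)
qed

lemma cspan_elim: "x \<in> cspan S \<Longrightarrow> \<exists>F c. finite F \<and> F \<subseteq> S \<and> x = (\<Sum>y\<in>F. c y *\<^sub>C y)"
  by (auto simp: cspan_def)

lemma onb_agree:
  fixes f g :: "'a::complex_inner \<Rightarrow> 'b::t2_space"
  assumes "orthonormal_basis {1..} u" "continuous_on UNIV f" "continuous_on UNIV g"
    "\<And>x. x \<in> cspan (u ` {1..}) \<Longrightarrow> f x = g x"
  shows "f x = g x"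
proof -
  have "closure (cspan (u ` {1..})) \<subseteq> {x. f x = g x}"
    by (rule closure_minimal) (use assms in \<open>auto intro: closed_Collect_eq\<close>)
  then show ?thesis using onb_dense[OF assms(1)] by auto
qed

lemma perp_zero:
  assumes "orthonormal_basis {1..} u" "\<And>i. 1 \<le> i \<Longrightarrow> cinner (u i) y = 0"
  shows "y = (0::'a::complex_inner)"
proof -
  have "cinner y y = (\<lambda>_. 0) y"
  proof (rule onb_agree[OF assms(1), of "\<lambda>x. cinner x y"])
    show "continuous_on UNIV (\<lambda>x. cinner x y)" by (intro continuous_intros)
    show "continuous_on UNIV (\<lambda>x. 0::complex)" by (intro continuous_intros)
    fix x assume "x \<in> cspan (u ` {1..})"
    then obtain F c where F: "finite F" "F \<subseteq> u ` {1..}" "x = (\<Sum>y\<in>F. c y *\<^sub>C y)"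
      using cspan_elim by blast
    have "cinner x y = (\<Sum>z\<in>F. cnj (c z) * cinner z y)"
      using F by (simp add: cinner_sum_left cinner_scaleC_left)
    also have "\<dots> = 0"
      by (rule sum.neutral) (use F assms(2) in auto)
    finally show "cinner x y = 0" .
  qed
  then show ?thesis using cinner_eq_zero_iff by auto
qed

lemma scaleC_zero_left[simp]: "0 *\<^sub>C (x::'a::complex_vector) = 0"
  using scaleR_scaleC[of 0 x] by simp

lemma series_exists:
  fixes u :: "nat \<Rightarrow> 'a::complex_hilbert"
  assumes onb: "orthonormal_basis {1..} u" and bnd: "\<And>M. (\<Sum>j=1..M. (cmod (c j))\<^sup>2) \<le> K"
  shows "\<exists>w. \<forall>i\<ge>1. cinner (u i) w = c i"
proof -
  define s where "s M = (\<Sum>j=1..M. c j *\<^sub>C u j)" for M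
  define S where "S M = (\<Sum>j=1..M. (cmod (c j))\<^sup>2)" for M
  have incS: "incseq S"
    unfolding incseq_def S_def by (auto intro!: sum_mono2)
  have "S \<longlonglongrightarrow> (SUP M. S M)"
    by (rule LIMSEQ_incseq_SUP) (use bnd incS in \<open>auto simp: bdd_above_def S_def\<close>)
  then have CS: "Cauchy S" by (rule LIMSEQ_imp_Cauchy)
  have diff: "(norm (s n - s m))\<^sup>2 = S n - S m" if "m \<le> n" for m n
  proof -
    have sub: "{1..m} \<subseteq> {1..n}" using that by auto
    have "s n - s m = (\<Sum>j\<in>{1..n} - {1..m}. c j *\<^sub>C u j)"
      unfolding s_def by (rule sum_diff[symmetric]) (use sub in auto)
    moreover have "S n - S m = (\<Sum>j\<in>{1..n} - {1..m}. (cmod (c j))\<^sup>2)"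
      unfolding S_def by (rule sum_diff[symmetric]) (use sub in auto)
    moreover have sub2: "{1..n} - {1..m} \<subseteq> {1..}" by auto
    moreover have fin: "finite ({1..n} - {1..m})" by simp
    ultimately show ?thesis using onb_norm_sum[OF onb fin sub2, of c] by simp
  qed
  have "Cauchy s"
  proof (rule metric_CauchyI)
    fix e :: real assume e: "0 < e"
    then have "0 < e\<^sup>2" by simp
    from metric_CauchyD[OF CS this] obtain N where N: "\<And>m n. N \<le> m \<Longrightarrow> N \<le> n \<Longrightarrow> dist (S m) (S n) < e\<^sup>2"
      by blast
    have "dist (s m) (s n) < e" if "N \<le> m" "N \<le> n" for m n
    proof -
      have "(norm (s m - s n))\<^sup>2 < e\<^sup>2"
      proof (cases "m \<le> n")
        case True
        then have "(norm (s m - s n))\<^sup>2 = S n - S m" using diff[OF True] by (simp add: norm_minus_commute)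
        also have "\<dots> < e\<^sup>2" using N[OF that] by (simp add: dist_real_def)
        finally show ?thesis .
      next
        case False
        then have "(norm (s m - s n))\<^sup>2 = S m - S n" using diff[of n m] by simp
        also have "\<dots> < e\<^sup>2" using N[OF that] by (simp add: dist_real_def)
        finally show ?thesis .
      qed
      then have "norm (s m - s n) < e" using e by (simp add: power_less_imp_less_base)
      then show ?thesis by (simp add: dist_norm)
    qed
    then show "\<exists>M. \<forall>m\<ge>M. \<forall>n\<ge>M. dist (s m) (s n) < e" by blast
  qed
  then obtain w where w: "s \<longlonglongrightarrow> w"
    using Cauchy_convergent convergent_def by blast
  have "cinner (u i) w = c i" if "1 \<le> i" for i
  proof -
    have l: "(\<lambda>M. cinner (u i) (s M)) \<longlonglongrightarrow> cinner (u i) w"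
      by (intro tendsto_intros w)
    have "eventually (\<lambda>M. c i = cinner (u i) (s M)) sequentially"
      unfolding eventually_sequentially
      by (rule exI[of _ i]) (use that in \<open>auto simp: s_def onb_coeff[OF onb]\<close>)
    then have "(\<lambda>M. cinner (u i) (s M)) \<longlonglongrightarrow> c i"
      by (rule Lim_transform_eventually[OF tendsto_const])
    then show ?thesis using l LIMSEQ_unique by blast
  qed
  then show ?thesis by blast
qed

lemma weak_of_coeff:
  fixes u :: "nat \<Rightarrow> 'a::complex_inner"
  assumes onb: "orthonormal_basis {1..} u" and bnd: "\<And>k. norm (y k) \<le> B"
    and co: "\<And>i. 1 \<le> i \<Longrightarrow> (\<lambda>k. cinner (u i) (y k)) \<longlonglongrightarrow> cinner (u i) w"
  shows "(\<lambda>k. cinner x (y k)) \<longlonglongrightarrow> cinner x w"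
proof -
  have span: "(\<lambda>k. cinner z (y k)) \<longlonglongrightarrow> cinner z w" if zs: "z \<in> cspan (u ` {1..})" for z
  proof -
    obtain F c where F: "finite F" "F \<subseteq> u ` {1..}" "z = (\<Sum>v\<in>F. c v *\<^sub>C v)"
      using cspan_elim[OF zs] by blast
    have t: "(\<lambda>k. cinner v (y k)) \<longlonglongrightarrow> cinner v w" if "v \<in> F" for v
      using F(2) that co by auto
    have "(\<lambda>k. \<Sum>v\<in>F. cnj (c v) * cinner v (y k)) \<longlonglongrightarrow> (\<Sum>v\<in>F. cnj (c v) * cinner v w)"
      by (intro tendsto_sum tendsto_mult_left t)
    then show ?thesis using F(3) by (simp add: cinner_sum_left cinner_scaleC_left)
  qed
  have B0: "0 \<le> B" using bnd[of 0] norm_ge_zero order_trans by blast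
  show ?thesis
    unfolding LIMSEQ_iff
  proof (intro allI impI)
    fix r :: real assume r: "0 < r"
    define D where "D = B + norm w + 1"
    have D: "0 < D" using B0 by (simp add: D_def add_nonneg_pos)
    have "x \<in> closure (cspan (u ` {1..}))" using onb_dense[OF onb] by simp
    then obtain z where z: "z \<in> cspan (u ` {1..})" "dist z x < r / (2 * D)"
      using closure_approachable r D by (metis divide_pos_pos mult_pos_pos zero_less_numeral)
    obtain no where no: "\<And>n. no \<le> n \<Longrightarrow> norm (cinner z (y n) - cinner z w) < r / 2"
      using span[OF z(1)] r unfolding LIMSEQ_iff by (metis half_gt_zero)
    have "norm (cinner x (y n) - cinner x w) < r" if "no \<le> n" for n
    proof -
      have eq: "cinner x (y n) - cinner x w = cinner (x - z) (y n - w) + (cinner z (y n) - cinner z w)"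
        by (simp add: cinner_diff_left cinner_diff_right)
      have n1: "norm (x - z) < r / (2 * D)" using z(2) by (simp add: dist_norm norm_minus_commute)
      have n2: "norm (y n - w) \<le> B + norm w"
        using norm_triangle_ineq4[of "y n" w] bnd[of n] by linarith
      have "norm (cinner (x - z) (y n - w)) \<le> norm (x - z) * norm (y n - w)"
        by (rule cauchy_schwarz)
      also have "\<dots> \<le> r / (2 * D) * (B + norm w)"
        using n1 n2 r D by (intro mult_mono) (auto simp: B0)
      also have "\<dots> \<le> r / 2"
      proof -
        have "r / (2 * D) * (B + norm w) \<le> r / (2 * D) * D"
          using r D by (intro mult_left_mono) (auto simp: D_def)
        also have "\<dots> = r / 2" using D by simp
        finally show ?thesis .
      qed
      finally have "norm (cinner (x - z) (y n - w)) \<le> r / 2" .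
      then show ?thesis using eq no[OF that] norm_triangle_ineq[of "cinner (x - z) (y n - w)" "cinner z (y n) - cinner z w"]
        by simp
    qed
    then show "\<exists>no. \<forall>n\<ge>no. norm (cinner x (y n) - cinner x w) < r" by blast
  qed
qed

lemma riesz_onb:
  fixes \<phi> :: "'a::complex_hilbert \<Rightarrow> complex" and u :: "nat \<Rightarrow> 'a"
  assumes onb: "orthonormal_basis {1..} u"
    and add: "\<And>x y. \<phi> (x + y) = \<phi> x + \<phi> y"
    and hom: "\<And>c x. \<phi> (c *\<^sub>C x) = c * \<phi> x"
    and bnd: "\<And>x. cmod (\<phi> x) \<le> C * norm x"
  shows "\<exists>z. \<forall>x. \<phi> x = cinner z x"
proof -
  have z0: "\<phi> 0 = 0" using hom[of 0 0] by simp
  have sum: "\<phi> (\<Sum>j\<in>F. a j *\<^sub>C v j) = (\<Sum>j\<in>F. a j * \<phi> (v j))" for F a v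
    by (induction F rule: infinite_finite_induct) (auto simp: z0 add hom)
  define d where "d j = cnj (\<phi> (u j))" for j
  have dbnd: "(\<Sum>j=1..M. (cmod (d j))\<^sup>2) \<le> C\<^sup>2" for M
  proof -
    define y where "y = (\<Sum>j=1..M. d j *\<^sub>C u j)"
    define S where "S = (\<Sum>j=1..M. (cmod (d j))\<^sup>2)"
    have S0: "0 \<le> S" unfolding S_def by (simp add: sum_nonneg)
    have "\<phi> y = (\<Sum>j=1..M. d j * \<phi> (u j))" unfolding y_def by (rule sum)
    also have "\<dots> = (\<Sum>j=1..M. complex_of_real ((cmod (d j))\<^sup>2))"
    proof (rule sum.cong[OF refl])
      fix j
      have "cnj (\<phi> (u j)) * \<phi> (u j) = complex_of_real ((cmod (\<phi> (u j)))\<^sup>2)"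
        by (simp only: complex_norm_square mult.commute)
      then show "d j * \<phi> (u j) = complex_of_real ((cmod (d j))\<^sup>2)" by (simp add: d_def)
    qed
    finally have py: "\<phi> y = complex_of_real S" by (simp add: S_def)
    have ny: "(norm y)\<^sup>2 = S" unfolding y_def S_def by (rule onb_norm_sum[OF onb]) auto
    have "S \<le> C * norm y" using bnd[of y] py S0 by simp
    also have "norm y = sqrt S" using ny by (metis norm_ge_zero real_sqrt_unique)
    finally have le: "S \<le> C * sqrt S" .
    show "S \<le> C\<^sup>2"
    proof (cases "S = 0")
      case True then show ?thesis by simp
    next
      case False
      then have sp: "0 < sqrt S" using S0 by simp
      have "sqrt S * sqrt S \<le> C * sqrt S" using le S0 by (simp add: real_sqrt_mult_self)
      then have "sqrt S \<le> C" using sp by (rule mult_right_le_imp_le)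
      then have "(sqrt S)\<^sup>2 \<le> C\<^sup>2" using sp by (intro power_mono) auto
      then show ?thesis using S0 by simp
    qed
  qed
  obtain z where z: "\<And>i. 1 \<le> i \<Longrightarrow> cinner (u i) z = d i"
    using series_exists[OF onb dbnd] by blast
  have bl: "bounded_linear \<phi>"
  proof (rule bounded_linear_intro[where K = C])
    show "\<phi> (x + y) = \<phi> x + \<phi> y" for x y by (rule add)
    show "\<phi> (r *\<^sub>R x) = r *\<^sub>R \<phi> x" for r x
      by (simp add: scaleR_scaleC hom scaleR_conv_of_real)
    show "norm (\<phi> x) \<le> norm x * C" for x using bnd[of x] by (simp add: mult.commute)
  qed
  have "\<phi> x = cinner z x" for x
  proof (rule onb_agree[OF onb])
    show "continuous_on UNIV \<phi>" by (rule linear_continuous_on[OF bl])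
    show "continuous_on UNIV (cinner z)" by (intro continuous_intros)
    fix x assume "x \<in> cspan (u ` {1..})"
    then obtain F c where F: "finite F" "F \<subseteq> u ` {1..}" "x = (\<Sum>y\<in>F. c y *\<^sub>C y)"
      using cspan_elim by blast
    have "\<phi> x = (\<Sum>y\<in>F. c y * \<phi> y)" using F(3) sum[of c "\<lambda>y. y" F] by simp
    also have "\<dots> = (\<Sum>y\<in>F. c y * cinner z y)"
    proof (rule sum.cong[OF refl])
      fix y assume "y \<in> F"
      then obtain i where i: "1 \<le> i" "y = u i" using F(2) by auto
      have "cinner z y = cnj (cinner (u i) z)" using i by (simp add: cinner_commute[of z])
      also have "\<dots> = \<phi> y" using z[OF i(1)] i by (simp add: d_def)
      finally show "c y * \<phi> y = c y * cinner z y" by simp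
    qed
    also have "\<dots> = cinner z x" using F(3) by (simp add: cinner_sum_right cinner_scaleC_right)
    finally show "\<phi> x = cinner z x" .
  qed
  then show ?thesis by blast
qed

lemma clinear_add: "clinear A \<Longrightarrow> A (x + y) = A x + A y"
  by (simp add: clinear_def)
lemma clinear_scaleC: "clinear A \<Longrightarrow> A (c *\<^sub>C x) = c *\<^sub>C A x"
  by (simp add: clinear_def)
lemma clinear_zero: "clinear A \<Longrightarrow> A 0 = 0"
  using clinear_scaleC[of A 0 0] by simp
lemma clinear_scaleR: "clinear A \<Longrightarrow> A (r *\<^sub>R x) = r *\<^sub>R A x"
  by (simp add: scaleR_scaleC clinear_scaleC)
lemma clinear_minus: "clinear A \<Longrightarrow> A (- x) = - A x"
  using clinear_scaleR[of A "-1" x] by simp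
lemma clinear_diff: "clinear A \<Longrightarrow> A (x - y) = A x - A y"
  using clinear_add[of A x "-y"] clinear_minus[of A y] by simp
lemma clinear_sum: "clinear A \<Longrightarrow> A (\<Sum>j\<in>F. f j) = (\<Sum>j\<in>F. A (f j))"
  by (induction F rule: infinite_finite_induct) (auto simp: clinear_zero clinear_add)

lemma compact_op_bound:
  fixes A :: "'a::complex_inner \<Rightarrow> 'b::complex_inner"
  assumes "compact_op A"
  shows "\<exists>C. \<forall>x. norm (A x) \<le> C * norm x"
proof -
  have lin: "clinear A" and cpt: "compact (closure (A ` cball 0 1))"
    using assms by (auto simp: compact_op_def)
  obtain C where C: "\<And>y. y \<in> closure (A ` cball 0 1) \<Longrightarrow> norm y \<le> C"
    using compact_imp_bounded[OF cpt] unfolding bounded_iff by blast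
  have "norm (A x) \<le> C * norm x" for x
  proof (cases "x = 0")
    case True then show ?thesis by (simp add: clinear_zero[OF lin])
  next
    case False
    define x1 where "x1 = (1 / norm x) *\<^sub>R x"
    have "norm x1 = 1" using False by (simp add: x1_def)
    then have "A x1 \<in> closure (A ` cball 0 1)" using closure_subset by fastforce
    then have "norm (A x1) \<le> C" by (rule C)
    have "x = norm x *\<^sub>R x1" using False by (simp add: x1_def)
    then have "A x = norm x *\<^sub>R A x1" by (metis clinear_scaleR[OF lin])
    then have "norm (A x) = norm x * norm (A x1)" by simp
    also have "\<dots> \<le> norm x * C" using \<open>norm (A x1) \<le> C\<close> by (simp add: mult_left_mono)
    finally show ?thesis by (simp add: mult.commute)
  qed
  then show ?thesis by blast
qed

lemma freq_subseq:
  assumes "\<And>no. \<exists>n\<ge>no. P n"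
  obtains r :: "nat \<Rightarrow> nat" where "strict_mono r" "\<And>k. P (r k)"
proof -
  have inf: "infinite {n. P n}" using assms unfolding infinite_nat_iff_unbounded_le by auto
  have "strict_mono (enumerate {n. P n})"
    unfolding strict_mono_def using enumerate_mono[OF _ inf] by blast
  moreover have "P (enumerate {n. P n} k)" for k using enumerate_in_set[OF inf] by auto
  ultimately show ?thesis using that by blast
qed

lemma freq_subseq_ex:
  assumes "\<And>no. \<exists>n\<ge>no. P n"
  shows "\<exists>r :: nat \<Rightarrow> nat. strict_mono r \<and> (\<forall>k. P (r k))"
proof -
  have inf: "infinite {n. P n}" using assms unfolding infinite_nat_iff_unbounded_le by auto
  have "strict_mono (enumerate {n. P n})"
    unfolding strict_mono_def using enumerate_mono[OF _ inf] by blast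
  moreover have "P (enumerate {n. P n} k)" for k using enumerate_in_set[OF inf] by auto
  ultimately show ?thesis by blast
qed

lemma entry_le: "1 \<le> i \<Longrightarrow> i \<le> N \<Longrightarrow> cmod (x i) \<le> normCN N x"
proof -
  assume "1 \<le> i" "i \<le> N"
  then have "(cmod (x i))\<^sup>2 \<le> (\<Sum>j=1..N. (cmod (x j))\<^sup>2)"
    by (intro member_le_sum) auto
  then have "sqrt ((cmod (x i))\<^sup>2) \<le> normCN N x" unfolding normCN_def by (rule real_sqrt_le_mono)
  then show ?thesis by simp
qed

theorem theorem3p2:
  fixes A :: "'a::complex_hilbert \<Rightarrow> 'a"
    and f g :: 'a
    and u v :: "nat \<Rightarrow> 'a"
    and fN :: "nat \<Rightarrow> nat \<Rightarrow> complex"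
  assumes "compact_op A"
    and "inj A"
    and "A f = g"
    and "orthonormal_basis {1..} u"
    and "orthonormal_basis {1..} v"
    and "(\<lambda>N. normCN N (\<lambda>i. mat_app N (sec_mat A u v) (fN N) i - sec_vec v g i)) \<longlonglongrightarrow> 0"
    and "bdd_above (range (\<lambda>N. norm (synth N u (fN N))))"
  shows "(\<lambda>N. norm (g - A (synth N u (fN N)))) \<longlonglongrightarrow> 0 \<and>
         (\<forall>\<eta>. (\<lambda>N. cinner \<eta> (f - synth N u (fN N))) \<longlonglongrightarrow> 0)"
proof -
  define h where "h N = synth N u (fN N)" for N
  define w where "w N = h N - f" for N
  have lin: "clinear A" and cpt: "compact (closure (A ` cball 0 1))"
    using assms(1) by (auto simp: compact_op_def)
  obtain Bh where Bh: "\<And>N. norm (h N) \<le> Bh"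
    using assms(7) unfolding bdd_above_def h_def by auto
  define B where "B = Bh + norm f + 1"
  have wB: "norm (w N) \<le> B" for N
    using norm_triangle_ineq4[of "h N" f] Bh[of N] by (simp add: w_def B_def)
  have B0: "0 < B" using Bh[of 0] norm_ge_zero[of "h 0"] norm_ge_zero[of f] unfolding B_def by linarith
  have Aw: "A (w N) = A (h N) - g" for N using clinear_diff[OF lin] assms(3) by (simp add: w_def)
  have entry: "mat_app N (sec_mat A u v) (fN N) i - sec_vec v g i = cinner (v i) (A (w N))" for N i
  proof -
    have "A (h N) = (\<Sum>j=1..N. fN N j *\<^sub>C A (u j))"
      unfolding h_def synth_def by (simp add: clinear_sum[OF lin] clinear_scaleC[OF lin])
    then have "cinner (v i) (A (h N)) = (\<Sum>j=1..N. sec_mat A u v i j * fN N j)"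
      by (simp add: cinner_sum_right cinner_scaleC_right sec_mat_def mult.commute)
    then show ?thesis
      by (simp add: mat_app_def sec_vec_def Aw cinner_diff_right)
  qed
  have coef0: "(\<lambda>N. cinner (v i) (A (w N))) \<longlonglongrightarrow> 0" if "1 \<le> i" for i
  proof (rule Lim_null_comparison[OF _ assms(6)])
    show "\<forall>\<^sub>F N in sequentially. norm (cinner (v i) (A (w N)))
        \<le> normCN N (\<lambda>i. mat_app N (sec_mat A u v) (fN N) i - sec_vec v g i)"
      unfolding eventually_sequentially
    proof (intro exI allI impI)
      fix N assume "i \<le> N"
      then show "norm (cinner (v i) (A (w N))) \<le> normCN N (\<lambda>i. mat_app N (sec_mat A u v) (fN N) i - sec_vec v g i)"
        using entry_le[OF that, of N "\<lambda>i. mat_app N (sec_mat A u v) (fN N) i - sec_vec v g i"]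
        by (simp add: entry)
    qed
  qed
  have claim1: "(\<lambda>N. norm (A (w N))) \<longlonglongrightarrow> 0"
  proof (rule ccontr)
    assume not: "\<not> ?thesis"
    then have "\<not> (\<forall>r>0. \<exists>no. \<forall>n\<ge>no. norm (norm (A (w n)) - 0) < r)"
      unfolding LIMSEQ_iff .
    then obtain \<delta> where d: "0 < \<delta>" and fr0: "\<forall>no. \<exists>n\<ge>no. \<not> norm (norm (A (w n)) - 0) < \<delta>"
      by blast
    have fr: "\<exists>n\<ge>no. \<delta> \<le> norm (A (w n))" for no
      using fr0 by (simp add: not_less)
    have "\<exists>r :: nat \<Rightarrow> nat. strict_mono r \<and> (\<forall>k. \<delta> \<le> norm (A (w (r k))))"
      by (rule freq_subseq_ex) (rule fr)
    then obtain r :: "nat \<Rightarrow> nat" where r1: "strict_mono r" and r2: "\<forall>k. \<delta> \<le> norm (A (w (r k)))"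
      by blast
    note r = r1 r2[rule_format]
    define x where "x k = (1 / B) *\<^sub>R w (r k)" for k
    have xin: "A (x k) \<in> closure (A ` cball 0 1)" for k
    proof -
      have "norm (x k) \<le> 1" using wB[of "r k"] B0 by (simp add: x_def divide_le_eq)
      then show ?thesis using closure_subset by fastforce
    qed
    have xin': "\<forall>k. A (x k) \<in> closure (A ` cball 0 1)" using xin by blast
    obtain y' and s :: "nat \<Rightarrow> nat" where s: "strict_mono s" and lim: "((\<lambda>k. A (x k)) \<circ> s) \<longlonglongrightarrow> y'"
      using seq_compactE[OF compact_imp_seq_compact[OF cpt] xin'] by blast
    have wx: "A (w (r k)) = B *\<^sub>R A (x k)" for k
      using B0 by (simp add: x_def clinear_scaleR[OF lin])
    have limw: "(\<lambda>k. A (w (r (s k)))) \<longlonglongrightarrow> B *\<^sub>R y'"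
      using tendsto_scaleR[OF tendsto_const lim, of B] by (simp add: wx o_def)
    have rs: "strict_mono (r \<circ> s)" using r(1) s by (rule strict_mono_o)
    have yz: "B *\<^sub>R y' = 0"
    proof (rule perp_zero[OF assms(5)])
      fix i :: nat assume i: "1 \<le> i"
      have "(\<lambda>k. cinner (v i) (A (w (r (s k))))) \<longlonglongrightarrow> cinner (v i) (B *\<^sub>R y')"
        by (intro tendsto_intros limw)
      moreover have "(\<lambda>k. cinner (v i) (A (w (r (s k))))) \<longlonglongrightarrow> 0"
        using LIMSEQ_subseq_LIMSEQ[OF coef0[OF i] rs] by (simp add: o_def)
      ultimately show "cinner (v i) (B *\<^sub>R y') = 0" using LIMSEQ_unique by blast
    qed
    have "(\<lambda>k. norm (A (w (r (s k))))) \<longlonglongrightarrow> norm (B *\<^sub>R y')"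
      by (rule tendsto_norm[OF limw])
    then have "(\<lambda>k. norm (A (w (r (s k))))) \<longlonglongrightarrow> 0"
      unfolding yz norm_zero .
    moreover have "\<exists>N. \<forall>n\<ge>N. \<delta> \<le> norm (A (w (r (s n))))" using r(2) by blast
    ultimately have "\<delta> \<le> 0" by (rule LIMSEQ_le_const)
    then show False using d by simp
  qed
  have part1: "(\<lambda>N. norm (g - A (synth N u (fN N)))) \<longlonglongrightarrow> 0"
  proof -
    have "norm (g - A (synth N u (fN N))) = norm (A (w N))" for N
      by (simp add: Aw h_def norm_minus_commute)
    then show ?thesis using claim1 by simp
  qed
  obtain CA where CA: "\<And>x. norm (A x) \<le> CA * norm x"
    using compact_op_bound[OF assms(1)] by blast
  have Aw0: "(\<lambda>N. A (w N)) \<longlonglongrightarrow> 0"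
    using claim1 by (simp add: tendsto_norm_zero_iff)
  have part2: "(\<lambda>N. cinner \<eta> (w N)) \<longlonglongrightarrow> 0" for \<eta>
  proof (rule ccontr)
    assume not: "\<not> ?thesis"
    then have "\<not> (\<forall>r>0. \<exists>no. \<forall>n\<ge>no. norm (cinner \<eta> (w n) - 0) < r)"
      unfolding LIMSEQ_iff .
    then obtain \<delta> where d: "0 < \<delta>" and fr0: "\<forall>no. \<exists>n\<ge>no. \<not> norm (cinner \<eta> (w n) - 0) < \<delta>"
      by blast
    have fr: "\<exists>n\<ge>no. \<delta> \<le> cmod (cinner \<eta> (w n))" for no
      using fr0 by (simp add: not_less)
    have "\<exists>r :: nat \<Rightarrow> nat. strict_mono r \<and> (\<forall>k. \<delta> \<le> cmod (cinner \<eta> (w (r k))))"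
      by (rule freq_subseq_ex) (rule fr)
    then obtain r :: "nat \<Rightarrow> nat" where r1: "strict_mono r" and r2: "\<forall>k. \<delta> \<le> cmod (cinner \<eta> (w (r k)))"
      by blast
    define c where "c k j = (if 1 \<le> j then cinner (u j) (w (r k)) else 0)" for k j
    have cb: "cmod (c k j) \<le> B" for k j
    proof (cases "1 \<le> j")
      case True
      have "cmod (cinner (u j) (w (r k))) \<le> norm (u j) * norm (w (r k))" by (rule cauchy_schwarz)
      also have "\<dots> \<le> B" using onb_norm[OF assms(4) True] wB[of "r k"] by simp
      finally show ?thesis using True by (simp add: c_def)
    next
      case False then show ?thesis using B0 by (simp add: c_def)
    qed
    obtain s :: "nat \<Rightarrow> nat" and d where s: "strict_mono s" and cd: "\<And>j. (\<lambda>k. c (s k) j) \<longlonglongrightarrow> d j"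
      using coeff_subseq[of c B, OF cb] by blast
    define y where "y k = w (r (s k))" for k
    have yB: "norm (y k) \<le> B" for k using wB by (simp add: y_def)
    have cy: "(\<lambda>k. cinner (u i) (y k)) \<longlonglongrightarrow> d i" if i: "1 \<le> i" for i
      using cd[of i] i by (simp add: c_def y_def)
    have dbnd: "(\<Sum>j=1..M. (cmod (d j))\<^sup>2) \<le> B\<^sup>2" for M
    proof (rule LIMSEQ_le_const2)
      show "(\<lambda>k. \<Sum>j=1..M. (cmod (cinner (u j) (y k)))\<^sup>2) \<longlonglongrightarrow> (\<Sum>j=1..M. (cmod (d j))\<^sup>2)"
        by (intro tendsto_intros cy) auto
      have "(\<Sum>j=1..M. (cmod (cinner (u j) (y k)))\<^sup>2) \<le> B\<^sup>2" for k
      proof -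
        have "(\<Sum>j=1..M. (cmod (cinner (u j) (y k)))\<^sup>2) \<le> (norm (y k))\<^sup>2"
          by (rule bessel[OF assms(4)]) auto
        also have "\<dots> \<le> B\<^sup>2" using yB[of k] by (intro power_mono) auto
        finally show ?thesis .
      qed
      then show "\<exists>N. \<forall>n\<ge>N. (\<Sum>j=1..M. (cmod (cinner (u j) (y n)))\<^sup>2) \<le> B\<^sup>2" by blast
    qed
    obtain z0 where z0: "\<And>i. 1 \<le> i \<Longrightarrow> cinner (u i) z0 = d i"
      using series_exists[OF assms(4) dbnd] by blast
    have weak: "(\<lambda>k. cinner x (y k)) \<longlonglongrightarrow> cinner x z0" for x
      by (rule weak_of_coeff[OF assms(4) yB]) (use cy z0 in auto)
    have rs: "strict_mono (r \<circ> s)" using r1 s by (rule strict_mono_o)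
    have Ay0: "(\<lambda>k. A (y k)) \<longlonglongrightarrow> 0"
      using LIMSEQ_subseq_LIMSEQ[OF Aw0 rs] by (simp add: o_def y_def)
    have Az: "cinner \<zeta> (A z0) = 0" for \<zeta>
    proof -
      have "\<exists>zz. \<forall>x. cinner \<zeta> (A x) = cinner zz x"
      proof (rule riesz_onb[OF assms(4)])
        show "cinner \<zeta> (A (x + y)) = cinner \<zeta> (A x) + cinner \<zeta> (A y)" for x y
          by (simp add: clinear_add[OF lin] cinner_add_right)
        show "cinner \<zeta> (A (c *\<^sub>C x)) = c * cinner \<zeta> (A x)" for c x
          by (simp add: clinear_scaleC[OF lin] cinner_scaleC_right)
        show "cmod (cinner \<zeta> (A x)) \<le> (norm \<zeta> * CA) * norm x" for x
        proof -
          have "cmod (cinner \<zeta> (A x)) \<le> norm \<zeta> * norm (A x)" by (rule cauchy_schwarz)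
          also have "\<dots> \<le> norm \<zeta> * (CA * norm x)" by (intro mult_left_mono CA) simp
          finally show ?thesis by (simp add: mult.assoc)
        qed
      qed
      then obtain zz where zz: "\<And>x. cinner \<zeta> (A x) = cinner zz x" by blast
      have "(\<lambda>k. cinner \<zeta> (A (y k))) \<longlonglongrightarrow> cinner zz z0"
        unfolding zz by (rule weak)
      moreover have "(\<lambda>k. cinner \<zeta> (A (y k))) \<longlonglongrightarrow> cinner \<zeta> 0"
        by (intro tendsto_intros Ay0)
      ultimately have "cinner zz z0 = 0" using LIMSEQ_unique by fastforce
      then show ?thesis by (simp add: zz)
    qed
    have "A z0 = 0" using Az[of "A z0"] cinner_eq_zero_iff by blast
    then have "z0 = 0" using assms(2) clinear_zero[OF lin] by (metis injD)
    then have "(\<lambda>k. cinner \<eta> (y k)) \<longlonglongrightarrow> 0" using weak[of \<eta>] by (simp only: cinner_zero_right)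
    then have "(\<lambda>k. cmod (cinner \<eta> (y k))) \<longlonglongrightarrow> 0" by (rule tendsto_norm_zero_iff[THEN iffD2])
    moreover have "\<exists>N. \<forall>n\<ge>N. \<delta> \<le> cmod (cinner \<eta> (y n))" using r2 by (auto simp: y_def)
    ultimately have "\<delta> \<le> 0" by (rule LIMSEQ_le_const)
    then show False using d by simp
  qed
  have "(\<lambda>N. cinner \<eta> (f - synth N u (fN N))) \<longlonglongrightarrow> 0" for \<eta>
  proof -
    have "cinner \<eta> (f - synth N u (fN N)) = - cinner \<eta> (w N)" for N
      by (simp add: w_def h_def cinner_diff_right)
    then show ?thesis using tendsto_minus[OF part2[of \<eta>]] by simp
  qed
  then show ?thesis using part1 by blast
qed

end
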